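(* Let $A$ be a synaptic algebra, $p,q\in P$, $c:=(pqp+p^{\perp}q^{\perp}p^{\perp})^{1/2}$ and $s:=(pq^{\perp}p+p^{\perp}qp^{\perp})^{1/2}$. Then: (i) $(s^{\circ})^{\perp}p=p(s^{\circ})^{\perp}=(s^{\circ})^{\perp}q=q(s^{\circ})^{\perp}=(s^{\circ})^{\perp}\wedge p=(s^{\circ})^{\perp}\wedge q=p\wedge q$; (ii) $(c^{\circ})^{\perp}p=p(c^{\circ})^{\perp}=(c^{\circ})^{\perp}q^{\perp}=q^{\perp}(c^{\circ})^{\perp}=(c^{\circ})^{\perp}\wedge p=(c^{\circ})^{\perp}\wedge q^{\perp}=p\wedge q^{\perp}$; (iii) $(c^{\circ})^{\perp}p^{\perp}=p^{\perp}(c^{\circ})^{\perp}=(c^{\circ})^{\perp}q=q(c^{\circ})^{\perp}=(c^{\circ})^{\perp}\wedge p^{\perp}=(c^{\circ})^{\perp}\wedge q=p^{\perp}\wedge q$; (iv) $(s^{\circ})^{\perp}p^{\perp}=p^{\perp}(s^{\circ})^{\perp}=(s^{\circ})^{\perp}q^{\perp}=q^{\perp}(s^{\circ})^{\perp}=(s^{\circ})^{\perp}\wedge p^{\perp}=(s^{\circ})^{\perp}\wedge q^{\perp}=p^{\perp}\wedge q^{\perp}$.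
   Context: Synaptic algebra (Foulis): $R$ is a real linear associative algebra with unit $1$, and $A\subseteq R$ is a real linear subspace with $1\in A$. For $a,b\in A$ write $aCb$ iff $ab=ba$; $C(a):=\{b\in A: aCb\}$; $CC(a):=\{b\in A: bCd \text{ for all } d\in C(a)\}$. $A$ is a synaptic algebra with enveloping algebra $R$ iff: (SA1) $A$ is a partially ordered archimedean real linear space with positive cone $A^+$, $1$ is an order unit, $\|\cdot\|$ the order-unit norm; (SA2) $a\in A\Rightarrow a^2\in A^+$; (SA3) $a,b\in A^+\Rightarrow aba\in A^+$; (SA4) if $a\in A$, $b\in A^+$, $aba=0$ then $ab=ba=0$; (SA5) if $a\in A^+$ there is $b\in A^+\cap CC(a)$ with $b^2=a$; (SA6) for $a\in A$ there is $p=p^2\in A$ with $ab=0\Leftrightarrow pb=0$ for all $b\in A$; (SA7) if $1\le a$ there is $b\in A$ with $ab=ba=1$; (SA8) if $a,b\in A$, $a_1\le a_2\le\cdots$ are pairwise commuting elements of $C(b)$ with $\|a-a_n\|\to0$, then $a\in C(b)$. $A$ is nondegenerate. $P:=\{p\in A:p=p^2\}$ with the inherited order is an orthomodular lattice with $p^{\perp}:=1-p$, meet $\wedge$, join $\vee$. For $0\le a$, $a^{1/2}$ is its unique positive square root in $A$. The carrier $a^{\circ}$ of $a\in A$ is the unique projection such that for all $b\in A$, $ab=0\Leftrightarrow a^{\circ}b=0$. *)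

theory Defs
  imports Complex_Main
begin

text \<open>The enveloping algebra R is the type 'a, a real
linear associative algebra with unit (class real_algebra_1). The synaptic algebra is a
subset A of 'a; its partial order is given by its positive cone Apos.\<close>

definition sa_le :: "'a::real_algebra_1 set \<Rightarrow> 'a \<Rightarrow> 'a \<Rightarrow> bool" where
  "sa_le Apos x y \<longleftrightarrow> y - x \<in> Apos"

definition sa_commute :: "'a::real_algebra_1 \<Rightarrow> 'a \<Rightarrow> bool" where
  "sa_commute a b \<longleftrightarrow> a * b = b * a"

definition sa_C :: "'a::real_algebra_1 set \<Rightarrow> 'a \<Rightarrow> 'a set" where
  "sa_C A a = {b \<in> A. sa_commute a b}"

definition sa_CC :: "'a::real_algebra_1 set \<Rightarrow> 'a \<Rightarrow> 'a set" where
  "sa_CC A a = {b \<in> A. \<forall>d \<in> sa_C A a. sa_commute b d}"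

definition sa_norm :: "'a::real_algebra_1 set \<Rightarrow> 'a \<Rightarrow> real" where
  "sa_norm Apos a = Inf {l::real. 0 \<le> l \<and> sa_le Apos (- (l *\<^sub>R 1)) a \<and> sa_le Apos a (l *\<^sub>R 1)}"

definition synaptic_algebra :: "'a::real_algebra_1 set \<Rightarrow> 'a set \<Rightarrow> bool" where
  "synaptic_algebra A Apos \<longleftrightarrow>
     \<comment> \<open>A is a real linear subspace of R containing 1\<close>
     1 \<in> A \<and> (\<forall>x\<in>A. \<forall>y\<in>A. x + y \<in> A) \<and> (\<forall>x\<in>A. \<forall>r::real. r *\<^sub>R x \<in> A) \<and>
     \<comment> \<open>nondegenerate\<close>
     (1::'a) \<noteq> 0 \<and>
     \<comment> \<open>(SA1) partially ordered archimedean real linear space with positive cone Apos, 1 order unit\<close>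
     Apos \<subseteq> A \<and> 0 \<in> Apos \<and> (\<forall>x\<in>Apos. \<forall>y\<in>Apos. x + y \<in> Apos) \<and>
     (\<forall>x\<in>Apos. \<forall>r::real. 0 \<le> r \<longrightarrow> r *\<^sub>R x \<in> Apos) \<and>
     (\<forall>x\<in>Apos. - x \<in> Apos \<longrightarrow> x = 0) \<and>
     (\<forall>a\<in>A. \<forall>b\<in>A. (\<forall>n::nat. sa_le Apos (real n *\<^sub>R a) b) \<longrightarrow> sa_le Apos a 0) \<and>
     (\<forall>a\<in>A. \<exists>n::nat. sa_le Apos a (real n *\<^sub>R 1)) \<and>
     \<comment> \<open>(SA2)\<close>
     (\<forall>a\<in>A. a * a \<in> Apos) \<and>
     \<comment> \<open>(SA3)\<close>
     (\<forall>a\<in>Apos. \<forall>b\<in>Apos. a * b * a \<in> Apos) \<and>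
     \<comment> \<open>(SA4)\<close>
     (\<forall>a\<in>A. \<forall>b\<in>Apos. a * b * a = 0 \<longrightarrow> a * b = 0 \<and> b * a = 0) \<and>
     \<comment> \<open>(SA5)\<close>
     (\<forall>a\<in>Apos. \<exists>b\<in>Apos \<inter> sa_CC A a. b * b = a) \<and>
     \<comment> \<open>(SA6)\<close>
     (\<forall>a\<in>A. \<exists>p\<in>A. p = p * p \<and> (\<forall>b\<in>A. a * b = 0 \<longleftrightarrow> p * b = 0)) \<and>
     \<comment> \<open>(SA7)\<close>
     (\<forall>a\<in>A. sa_le Apos 1 a \<longrightarrow> (\<exists>b\<in>A. a * b = 1 \<and> b * a = 1)) \<and>
     \<comment> \<open>(SA8)\<close>
     (\<forall>a\<in>A. \<forall>b\<in>A. \<forall>s::nat \<Rightarrow> 'a.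
        (\<forall>n. s n \<in> sa_C A b) \<and> (\<forall>n. sa_le Apos (s n) (s (Suc n))) \<and>
        (\<forall>m n. sa_commute (s m) (s n)) \<and>
        (\<lambda>n. sa_norm Apos (a - s n)) \<longlonglongrightarrow> 0
        \<longrightarrow> a \<in> sa_C A b)"

definition sa_P :: "'a::real_algebra_1 set \<Rightarrow> 'a set" where
  "sa_P A = {p \<in> A. p = p * p}"

definition sa_perp :: "'a::real_algebra_1 \<Rightarrow> 'a" where
  "sa_perp p = 1 - p"

definition sa_meet :: "'a::real_algebra_1 set \<Rightarrow> 'a set \<Rightarrow> 'a \<Rightarrow> 'a \<Rightarrow> 'a" where
  "sa_meet A Apos p q = (THE r. r \<in> sa_P A \<and> sa_le Apos r p \<and> sa_le Apos r q \<and>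
      (\<forall>t\<in>sa_P A. sa_le Apos t p \<and> sa_le Apos t q \<longrightarrow> sa_le Apos t r))"

definition sa_sqrt :: "'a::real_algebra_1 set \<Rightarrow> 'a \<Rightarrow> 'a" where
  "sa_sqrt Apos a = (THE b. b \<in> Apos \<and> b * b = a)"

definition sa_carrier :: "'a::real_algebra_1 set \<Rightarrow> 'a \<Rightarrow> 'a" where
  "sa_carrier A a = (THE p. p \<in> sa_P A \<and> (\<forall>b\<in>A. a * b = 0 \<longleftrightarrow> p * b = 0))"

end

theory Submission
  imports Defs
begin

context
  fixes A Apos :: "'a::real_algebra_1 set"
  assumes SA: "synaptic_algebra A Apos"
begin

lemma SAparts:
  "1 \<in> A" "\<forall>x\<in>A. \<forall>y\<in>A. x + y \<in> A" "\<forall>x\<in>A. \<forall>r::real. r *\<^sub>R x \<in> A"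
  "Apos \<subseteq> A" "\<forall>x\<in>Apos. \<forall>y\<in>Apos. x + y \<in> Apos"
  "\<forall>x\<in>Apos. - x \<in> Apos \<longrightarrow> x = 0"
  "\<forall>a\<in>A. a * a \<in> Apos"
  "\<forall>a\<in>Apos. \<forall>b\<in>Apos. a * b * a \<in> Apos"
  "\<forall>a\<in>A. \<forall>b\<in>Apos. a * b * a = 0 \<longrightarrow> a * b = 0 \<and> b * a = 0"
  "\<forall>a\<in>Apos. \<exists>b\<in>Apos \<inter> sa_CC A a. b * b = a"
  "\<forall>a\<in>A. \<exists>p\<in>A. p = p * p \<and> (\<forall>b\<in>A. a * b = 0 \<longleftrightarrow> p * b = 0)"
  apply (insert SA[unfolded synaptic_algebra_def])
  apply (elim conjE; assumption)+
  done

lemma one_A: "1 \<in> A" by (rule SAparts(1))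
lemma add_A: "x \<in> A \<Longrightarrow> y \<in> A \<Longrightarrow> x + y \<in> A" using SAparts(2) by blast
lemma scale_A: "x \<in> A \<Longrightarrow> r *\<^sub>R x \<in> A" using SAparts(3) by blast
lemma neg_A: "x \<in> A \<Longrightarrow> - x \<in> A" using scale_A[of x "-1"] by simp
lemma diff_A: "x \<in> A \<Longrightarrow> y \<in> A \<Longrightarrow> x - y \<in> A" using add_A[of x "-y"] neg_A by simp
lemma pos_A: "x \<in> Apos \<Longrightarrow> x \<in> A" using SAparts(4) by blast
lemma pos_add: "x \<in> Apos \<Longrightarrow> y \<in> Apos \<Longrightarrow> x + y \<in> Apos" using SAparts(5) by blast
lemma pos_antisym: "x \<in> Apos \<Longrightarrow> - x \<in> Apos \<Longrightarrow> x = 0" using SAparts(6) by blast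
lemma sq_pos: "x \<in> A \<Longrightarrow> x * x \<in> Apos" using SAparts(7) by blast
lemma sa3: "a \<in> Apos \<Longrightarrow> b \<in> Apos \<Longrightarrow> a * b * a \<in> Apos" using SAparts(8) by blast
lemma sa4: "a \<in> A \<Longrightarrow> b \<in> Apos \<Longrightarrow> a * b * a = 0 \<Longrightarrow> a * b = 0 \<and> b * a = 0"
  using SAparts(9) by blast
lemma sa5: "a \<in> Apos \<Longrightarrow> \<exists>b\<in>Apos. b \<in> sa_CC A a \<and> b * b = a"
  using SAparts(10) by blast
lemma sa6: "a \<in> A \<Longrightarrow> \<exists>p\<in>A. p = p * p \<and> (\<forall>b\<in>A. a * b = 0 \<longleftrightarrow> p * b = 0)"
  using SAparts(11) by blast

lemma one_pos: "1 \<in> Apos" using sq_pos[OF one_A] by simp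

lemma jordan_A: assumes x: "x \<in> A" and y: "y \<in> A" shows "x * y + y * x \<in> A"
proof -
  have "(x+y)*(x+y) - x*x - y*y \<in> A"
    by (intro diff_A pos_A[OF sq_pos] add_A x y)
  moreover have "(x+y)*(x+y) - x*x - y*y = x*y + y*x" by (simp add: algebra_simps)
  ultimately show ?thesis by simp
qed

lemma half_A: assumes "x + x \<in> A" shows "x \<in> A"
proof -
  have "(1/2::real) *\<^sub>R (x + x) \<in> A" using assms by (rule scale_A)
  moreover have "(1/2::real) *\<^sub>R (x + x) = x"
    by (simp add: scaleR_add_right[symmetric] scaleR_add_left[symmetric])
  ultimately show ?thesis by simp
qed

lemma comm_A: "x \<in> A \<Longrightarrow> y \<in> A \<Longrightarrow> x * y = y * x \<Longrightarrow> x * y \<in> A"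
  using jordan_A[of x y] half_A[of "x*y"] by simp

lemma xyx_A: assumes x: "x \<in> A" and y: "y \<in> A" shows "x * y * x \<in> A"
proof -
  have "x * (x*y+y*x) + (x*y+y*x) * x - (x*x*y + y*(x*x)) \<in> A"
    by (intro diff_A jordan_A x y pos_A[OF sq_pos])
  moreover have "x * (x*y+y*x) + (x*y+y*x) * x - (x*x*y + y*(x*x)) = x*y*x + x*y*x"
    by (simp add: algebra_simps)
  ultimately have "x*y*x + x*y*x \<in> A" by simp
  thus ?thesis by (rule half_A)
qed

lemma proj_A: "p \<in> sa_P A \<Longrightarrow> p \<in> A" unfolding sa_P_def by simp
lemma proj_idem: "p \<in> sa_P A \<Longrightarrow> p * p = p" unfolding sa_P_def by simp
lemma proj_pos: "p \<in> sa_P A \<Longrightarrow> p \<in> Apos" unfolding sa_P_def using sq_pos by force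

lemma perp_P: assumes "p \<in> sa_P A" shows "sa_perp p \<in> sa_P A"
proof -
  have "(1 - p) * (1 - p) = 1 - p" using proj_idem[OF assms] by (simp add: algebra_simps)
  thus ?thesis using assms diff_A[OF one_A proj_A] unfolding sa_P_def sa_perp_def by auto
qed

lemma perp_perp: "sa_perp (sa_perp p) = p" unfolding sa_perp_def by simp

lemma sq_zero: "x \<in> A \<Longrightarrow> x * x = 0 \<Longrightarrow> x = 0"
  using sa4[of x 1] one_pos by simp

lemma lemL: assumes x: "x \<in> A" and t: "t \<in> Apos" and h: "x * x * t = 0"
  shows "x * t = 0 \<and> t * x = 0"
proof -
  have "x * t * x \<in> A" using xyx_A x pos_A t by blast
  moreover have "(x*t*x)*(x*t*x) = 0"
  proof -
    have "(x*t*x)*(x*t*x) = x*t*(x*x*t)*x" by (simp add: mult.assoc)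
    thus ?thesis using h by simp
  qed
  ultimately have "x * t * x = 0" by (rule sq_zero)
  thus ?thesis using sa4 x t by blast
qed

lemma comm_pos: assumes y: "y \<in> Apos" and c: "c \<in> Apos" and yc: "y * c = c * y"
  shows "y * c \<in> Apos"
proof -
  obtain t where t: "t \<in> Apos" "t \<in> sa_CC A y" "t * t = y" using sa5 y by blast
  have "c \<in> sa_C A y" using c pos_A yc unfolding sa_C_def sa_commute_def by auto
  hence tc: "t * c = c * t" using t(2) unfolding sa_CC_def sa_commute_def by auto
  have "t * c * t \<in> Apos" using sa3 t c by blast
  moreover have "t * c * t = y * c" using tc t(3) by (metis mult.assoc)
  ultimately show ?thesis by simp
qed

lemma root_eq: assumes b: "b \<in> Apos" and r: "r \<in> Apos" and rc: "r \<in> sa_CC A (b*b)"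
  and rr: "r * r = b * b" shows "b = r"
proof -
  have bA: "b \<in> A" and rA: "r \<in> A" using b r pos_A by auto
  have "b \<in> sa_C A (b*b)" using bA unfolding sa_C_def sa_commute_def by (simp add: mult.assoc)
  hence br: "r * b = b * r" using rc unfolding sa_CC_def sa_commute_def by auto
  define x where "x = b - r"
  have xA: "x \<in> A" using bA rA diff_A x_def by simp
  have xx: "x * x \<in> Apos" using sq_pos xA by simp
  have xb: "x * b = b * x" unfolding x_def using br by (simp add: algebra_simps)
  have xr: "x * r = r * x" unfolding x_def using br by (simp add: algebra_simps)
  have c1: "x * x * b = b * (x * x)"
  proof -
    have "x * x * b = x * (x * b)" by (simp add: mult.assoc)
    also have "\<dots> = x * (b * x)" using xb by simp
    also have "\<dots> = (x * b) * x" by (simp add: mult.assoc)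
    also have "\<dots> = (b * x) * x" using xb by simp
    also have "\<dots> = b * (x * x)" by (simp add: mult.assoc)
    finally show ?thesis .
  qed
  have c2: "x * x * r = r * (x * x)"
  proof -
    have "x * x * r = x * (x * r)" by (simp add: mult.assoc)
    also have "\<dots> = x * (r * x)" using xr by simp
    also have "\<dots> = (x * r) * x" by (simp add: mult.assoc)
    also have "\<dots> = (r * x) * x" using xr by simp
    also have "\<dots> = r * (x * x)" by (simp add: mult.assoc)
    finally show ?thesis .
  qed
  have p1: "x * x * b \<in> Apos" using comm_pos[OF xx b c1] .
  have p2: "x * x * r \<in> Apos" using comm_pos[OF xx r c2] .
  have xbr: "x * (b + r) = 0" unfolding x_def using br rr by (simp add: algebra_simps)
  have "x * x * b + x * x * r = x * (x * (b + r))" by (simp add: algebra_simps)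
  also have "\<dots> = 0" using xbr by simp
  finally have neg: "x * x * b = - (x * x * r)" by (simp add: eq_neg_iff_add_eq_0)
  have z2: "x * x * r = 0" using p2 apply (rule pos_antisym) using p1 neg by simp
  have z1: "x * x * b = 0" using neg z2 by simp
  have "x * b = 0" using lemL[OF xA b z1] by simp
  moreover have "x * r = 0" using lemL[OF xA r z2] by simp
  moreover have "x * x = x * b - x * r" by (metis x_def right_diff_distrib)
  ultimately have "x * x = 0" by simp
  hence "x = 0" by (rule sq_zero[OF xA])
  thus ?thesis unfolding x_def by simp
qed

lemma sqrt_eq: assumes b: "b \<in> Apos" and a: "b * b = a"
  shows "sa_sqrt Apos a = b \<and> b \<in> sa_CC A a"
proof -
  have aP: "a \<in> Apos" using a sq_pos pos_A b by blast
  obtain r where r: "r \<in> Apos" "r \<in> sa_CC A a" "r * r = a" using sa5 aP by blast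
  have br: "b = r" using root_eq[OF b r(1)] r a by simp
  have "sa_sqrt Apos a = b"
    unfolding sa_sqrt_def
  proof (rule the_equality)
    show "b \<in> Apos \<and> b * b = a" using b a by simp
    fix b' assume "b' \<in> Apos \<and> b' * b' = a"
    thus "b' = b" using root_eq[of b' r] r br by auto
  qed
  thus ?thesis using br r by simp
qed

lemma proj_annih_eq: assumes f: "f \<in> sa_P A" and g: "g \<in> sa_P A"
  and h: "\<forall>b\<in>A. f * b = 0 \<longleftrightarrow> g * b = 0" shows "f = g"
proof -
  have fA: "f \<in> A" and gA: "g \<in> A" using f g proj_A by auto
  have ff: "f*f = f" and gg: "g*g = g" using f g proj_idem by auto
  have "f * (1 - f) = 0" using ff by (simp add: algebra_simps)
  hence g1: "g * (1 - f) = 0" using h diff_A[OF one_A fA] by blast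
  have "g * (1 - g) = 0" using gg by (simp add: algebra_simps)
  hence f1: "f * (1 - g) = 0" using h diff_A[OF one_A gA] by blast
  have "(1 - g) * f * (1 - g) = 0" using f1 by (simp add: mult.assoc)
  hence "f * (1 - g) = 0 \<and> (1 - g) * f = 0" using sa4 diff_A[OF one_A gA] proj_pos[OF f] by blast
  hence "f = g * f" by (simp add: algebra_simps)
  moreover have "g = g * f" using g1 by (simp add: algebra_simps)
  ultimately show ?thesis by simp
qed

lemma carrier: assumes z: "z \<in> A"
  shows "sa_carrier A z \<in> sa_P A \<and> (\<forall>b\<in>A. z * b = 0 \<longleftrightarrow> sa_carrier A z * b = 0)"
proof -
  obtain f where f: "f \<in> A" "f = f * f" "\<forall>b\<in>A. z * b = 0 \<longleftrightarrow> f * b = 0" using sa6 z by blast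
  have fP: "f \<in> sa_P A" using f unfolding sa_P_def by simp
  have "sa_carrier A z = f" unfolding sa_carrier_def
  proof (rule the_equality)
    show "f \<in> sa_P A \<and> (\<forall>b\<in>A. z * b = 0 \<longleftrightarrow> f * b = 0)" using fP f by simp
    fix g assume "g \<in> sa_P A \<and> (\<forall>b\<in>A. z * b = 0 \<longleftrightarrow> g * b = 0)"
    hence gP: "g \<in> sa_P A" and gann: "\<forall>b\<in>A. z * b = 0 \<longleftrightarrow> g * b = 0" by auto
    have "\<forall>b\<in>A. g * b = 0 \<longleftrightarrow> f * b = 0"
    proof
      fix b assume "b \<in> A"
      thus "g * b = 0 \<longleftrightarrow> f * b = 0" using gann f(3) by simp
    qed
    thus "g = f" by (rule proj_annih_eq[OF gP fP])
  qed
  thus ?thesis using fP f by simp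
qed


lemma proj_comm_P: assumes x: "x \<in> sa_P A" and y: "y \<in> sa_P A" and c: "x * y = y * x"
  shows "x * y \<in> sa_P A"
proof -
  have "x * y \<in> A" using comm_A proj_A x y c by blast
  moreover have "(x*y)*(x*y) = x*y"
  proof -
    have "(x*y)*(x*y) = x*(y*x)*y" by (simp add: mult.assoc)
    also have "\<dots> = (x*x)*(y*y)" using c by (metis mult.assoc)
    also have "\<dots> = x*y" using proj_idem x y by simp
    finally show ?thesis .
  qed
  ultimately show ?thesis unfolding sa_P_def by simp
qed

lemma le_proj: assumes t: "t \<in> sa_P A" and x: "x \<in> sa_P A" and le: "sa_le Apos t x"
  shows "t = t * x \<and> t = x * t"
proof -
  have xt: "x - t \<in> Apos" using le unfolding sa_le_def .
  define g where "g = 1 - x"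
  have gP: "g \<in> Apos" using proj_pos perp_P x unfolding g_def sa_perp_def by blast
  have gA: "g \<in> A" using pos_A gP by blast
  have tP: "t \<in> Apos" using proj_pos t by blast
  have gx: "g * x = 0" "x * g = 0" using proj_idem[OF x] unfolding g_def by (simp_all add: algebra_simps)
  have "g * (x - t) * g \<in> Apos" using sa3 gP xt by blast
  moreover have "g * (x - t) * g = - (g * t * g)" using gx by (simp add: algebra_simps)
  ultimately have neg: "- (g * t * g) \<in> Apos" by simp
  have "g * t * g = 0" by (rule pos_antisym[OF sa3[OF gP tP] neg])
  hence "g * t = 0 \<and> t * g = 0" using sa4 gA tP by blast
  thus ?thesis unfolding g_def by (simp add: algebra_simps)
qed

lemma le_antisym: "sa_le Apos a b \<Longrightarrow> sa_le Apos b a \<Longrightarrow> a = b"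
  unfolding sa_le_def using pos_antisym[of "b - a"] by simp

lemma meet_char: assumes m: "m \<in> sa_P A" and mx: "sa_le Apos m x" and my: "sa_le Apos m y"
  and gl: "\<forall>t\<in>sa_P A. sa_le Apos t x \<and> sa_le Apos t y \<longrightarrow> sa_le Apos t m"
  shows "sa_meet A Apos x y = m"
  unfolding sa_meet_def
proof (rule the_equality)
  show "m \<in> sa_P A \<and> sa_le Apos m x \<and> sa_le Apos m y \<and>
      (\<forall>t\<in>sa_P A. sa_le Apos t x \<and> sa_le Apos t y \<longrightarrow> sa_le Apos t m)" using assms by simp
  fix r assume r: "r \<in> sa_P A \<and> sa_le Apos r x \<and> sa_le Apos r y \<and>
      (\<forall>t\<in>sa_P A. sa_le Apos t x \<and> sa_le Apos t y \<longrightarrow> sa_le Apos t r)"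
  hence "sa_le Apos r m" "sa_le Apos m r" using gl m mx my by auto
  thus "r = m" using le_antisym by blast
qed

lemma prod_le1: assumes x: "x \<in> sa_P A" and y: "y \<in> sa_P A" and c: "x * y = y * x"
  shows "sa_le Apos (x * y) x"
proof -
  have c': "x * (1 - y) = (1 - y) * x" using c by (simp add: algebra_simps)
  have "x * (1 - y) \<in> sa_P A" using proj_comm_P[OF x perp_P[OF y]] c' unfolding sa_perp_def by simp
  hence "x * (1 - y) \<in> Apos" using proj_pos by blast
  thus ?thesis unfolding sa_le_def by (simp add: algebra_simps)
qed

lemma le_prod: assumes x: "x \<in> sa_P A" and y: "y \<in> sa_P A" and c: "x * y = y * x"
  and t: "t \<in> sa_P A" and h: "t = t*x" "t = x*t" "t = t*y" "t = y*t"
  shows "sa_le Apos t (x * y)"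
proof -
  have xy: "x * y \<in> sa_P A" using proj_comm_P x y c by blast
  have e1: "x * y * (1 - t) = x * y - t" using h by (simp add: algebra_simps)
  have e2: "(1 - t) * (x * y) = x * y - t" using h
    by (simp add: algebra_simps) (metis mult.assoc)
  have "x * y * (1 - t) \<in> sa_P A" using proj_comm_P[OF xy perp_P[OF t]] e1 e2 unfolding sa_perp_def by simp
  hence "x * y - t \<in> Apos" using proj_pos e1 by simp
  thus ?thesis unfolding sa_le_def .
qed

lemma meet_comm: assumes x: "x \<in> sa_P A" and y: "y \<in> sa_P A" and c: "x * y = y * x"
  shows "sa_meet A Apos x y = x * y"
proof (rule meet_char)
  show "x * y \<in> sa_P A" using proj_comm_P x y c by blast
  show "sa_le Apos (x * y) x" using prod_le1 x y c by blast
  show "sa_le Apos (x * y) y" using prod_le1[OF y x] c by simp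
  show "\<forall>t\<in>sa_P A. sa_le Apos t x \<and> sa_le Apos t y \<longrightarrow> sa_le Apos t (x * y)"
  proof (intro ballI impI)
    fix t assume t: "t \<in> sa_P A" and "sa_le Apos t x \<and> sa_le Apos t y"
    hence "t = t * x \<and> t = x * t" "t = t * y \<and> t = y * t" using le_proj x y by blast+
    thus "sa_le Apos t (x * y)" using le_prod x y c t by blast
  qed
qed


lemma ring_a: fixes p q :: "'b::ring_1" assumes pp: "p*p = p" and qq: "q*q = q"
  shows "p * (1 - q) * p + (1 - p) * q * (1 - p) = (p - q) * (p - q)"
proof -
  have 1: "p * (1 - q) * p = p - p*q*p" using pp by (simp add: algebra_simps)
  have 2: "(1 - p) * q * (1 - p) = q - q*p - p*q + p*q*p" using pp by (simp add: algebra_simps)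
  have 3: "(p - q) * (p - q) = p - p*q - q*p + q" using pp qq by (simp add: algebra_simps)
  show ?thesis unfolding 1 2 3 by (simp add: algebra_simps)
qed

lemma ring_e: fixes p q :: "'b::ring_1" assumes pp: "p*p = p" and qq: "q*q = q"
  shows "(p + q - 1) * ((p - q) * (p - q)) = ((p - q) * (p - q)) * (p + q - 1)"
proof -
  have pp': "p*(p*x) = p*x" for x by (metis mult.assoc pp)
  have qq': "q*(q*x) = q*x" for x by (metis mult.assoc qq)
  have 3: "(p - q) * (p - q) = p - p*q - q*p + q" using pp qq by (simp add: algebra_simps)
  have 4: "(p + q - 1) * (p - p*q - q*p + q) = p*q + q*p - p*q*p - q*p*q"
    by (simp add: algebra_simps pp qq pp' qq')
  have 5: "(p - p*q - q*p + q) * (p + q - 1) = p*q + q*p - p*q*p - q*p*q"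
    by (simp add: algebra_simps pp qq pp' qq')
  show ?thesis unfolding 3 4 5 ..
qed

lemma main:
  assumes p: "p \<in> sa_P A" and q: "q \<in> sa_P A"
    and s_def: "s = sa_sqrt Apos (p * sa_perp q * p + sa_perp p * q * sa_perp p)"
  shows "let u = sa_perp (sa_carrier A s) in
        u * p = p * u \<and> p * u = u * q \<and> u * q = q * u \<and> q * u = sa_meet A Apos u p \<and>
        sa_meet A Apos u p = sa_meet A Apos u q \<and> sa_meet A Apos u q = sa_meet A Apos p q"
proof -
  have pA: "p \<in> A" and qA: "q \<in> A" using p q proj_A by auto
  have pp: "p*p = p" and qq: "q*q = q" using p q proj_idem by auto
  define d where "d = p - q"
  define e where "e = p + q - 1"
  define a where "a = p * sa_perp q * p + sa_perp p * q * sa_perp p"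
  have dA: "d \<in> A" unfolding d_def using diff_A pA qA by simp
  have eA: "e \<in> A" unfolding e_def using diff_A add_A pA qA one_A by simp
  have a_eq: "a = d * d" unfolding a_def d_def sa_perp_def using ring_a[OF pp qq] .
  have aP: "a \<in> Apos" unfolding a_def
    using pos_add sa3 proj_pos perp_P p q by blast
  have ea: "e * a = a * e" unfolding a_eq d_def e_def using ring_e[OF pp qq] .
  obtain r where r: "r \<in> Apos" "r \<in> sa_CC A a" "r * r = a" using sa5 aP by blast
  have sr: "s = r" using sqrt_eq[OF r(1) r(3)] s_def a_def by simp
  have sP: "s \<in> Apos" and sCC: "s \<in> sa_CC A a" and ss: "s * s = a" using r sr by auto
  have sA: "s \<in> A" using pos_A sP by blast
  define f where "f = sa_carrier A s"
  have fP: "f \<in> sa_P A" and fann: "\<forall>b\<in>A. s * b = 0 \<longleftrightarrow> f * b = 0"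
    using carrier[OF sA] unfolding f_def by auto
  define u where "u = 1 - f"
  have uP: "u \<in> sa_P A" using perp_P[OF fP] unfolding u_def sa_perp_def .
  have uA: "u \<in> A" and uPos: "u \<in> Apos" using uP proj_A proj_pos by auto
  have fA: "f \<in> A" and fPos: "f \<in> Apos" using fP proj_A proj_pos by auto
  have ff: "f*f = f" using proj_idem fP by blast
  have fu: "f * u = 0" "u * f = 0" unfolding u_def using ff by (simp_all add: algebra_simps)
  have fu1: "f + u = 1" unfolding u_def by simp
  have su: "s * u = 0" using fann uA fu by blast
  have "d * d * u = 0" using su a_eq ss by (metis mult.assoc mult_zero_right)
  hence du: "d * u = 0" "u * d = 0" using lemL[OF dA uPos] by auto
  have "e \<in> sa_C A a" using eA ea unfolding sa_C_def sa_commute_def by simp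
  hence es: "s * e = e * s" using sCC unfolding sa_CC_def sa_commute_def by auto
  have eueA: "e * u * e \<in> A" using xyx_A eA uA by blast
  have "s * (e * u * e) = e * (s * u) * e" using es by (metis mult.assoc)
  hence "s * (e * u * e) = 0" using su by simp
  hence feue: "f * (e * u * e) = 0" using fann eueA by blast
  define a' where "a' = e * f + f * e"
  have a'A: "a' \<in> A" unfolding a'_def using jordan_A eA fA by blast
  have a'u: "a' * u = f * e * u" unfolding a'_def using fu by (simp add: algebra_simps)
  have ua': "u * a' = u * e * f" unfolding a'_def using fu by (simp add: algebra_simps) (metis mult.assoc mult_zero_left)
  have "a' * u * a' = f * e * u * a'" using a'u by simp
  also have "\<dots> = f * e * (u * a')" by (simp add: mult.assoc)
  also have "\<dots> = f * e * (u * e * f)" using ua' by simp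
  also have "\<dots> = (f * (e * u * e)) * f" by (simp add: mult.assoc)
  also have "\<dots> = 0" using feue by simp
  finally have "a' * u = 0 \<and> u * a' = 0" using sa4 a'A uPos by blast
  hence feu: "f * e * u = 0" and uef: "u * e * f = 0" using a'u ua' by auto
  have "e * u = (f + u) * e * u" using fu1 by simp
  also have "\<dots> = u * e * u" using feu by (simp add: algebra_simps)
  finally have eu1: "e * u = u * e * u" .
  have "u * e = u * e * (f + u)" using fu1 by simp
  also have "\<dots> = u * e * u" using uef by (simp add: algebra_simps)
  finally have eu: "e * u = u * e" using eu1 by simp
  have "(d + e) * u = u * (d + e)" using eu du by (simp add: algebra_simps)
  hence "(p + p - 1) * u = u * (p + p - 1)" unfolding d_def e_def by (simp add: algebra_simps)
  hence "(2::real) *\<^sub>R (p * u) = (2::real) *\<^sub>R (u * p)" by (simp add: scaleR_2 algebra_simps)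
  hence pu: "p * u = u * p" by simp
  have qu: "q * u = p * u" "u * q = u * p" using du unfolding d_def by (simp_all add: algebra_simps)
  have m1: "sa_meet A Apos u p = u * p" using meet_comm[OF uP p] pu by simp
  have m2: "sa_meet A Apos u q = u * q" using meet_comm[OF uP q] pu qu by simp
  have m3: "sa_meet A Apos p q = u * p"
  proof (rule meet_char)
    show "u * p \<in> sa_P A" using proj_comm_P[OF uP p] pu by simp
    show "sa_le Apos (u * p) p" using prod_le1[OF p uP] pu by simp
    show "sa_le Apos (u * p) q" using prod_le1[OF q uP] pu qu by simp
    show "\<forall>t\<in>sa_P A. sa_le Apos t p \<and> sa_le Apos t q \<longrightarrow> sa_le Apos t (u * p)"
    proof (intro ballI impI)
      fix t assume t: "t \<in> sa_P A" and "sa_le Apos t p \<and> sa_le Apos t q"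
      hence tp: "t = t * p \<and> t = p * t" and tq: "t = t * q \<and> t = q * t" using le_proj p q by blast+
      have tA: "t \<in> A" and tPos: "t \<in> Apos" using t proj_A proj_pos by auto
      have dt: "d * t = 0" unfolding d_def using tp tq by (simp add: algebra_simps)
      have "s * s * t = 0" using ss a_eq dt by (metis mult.assoc mult_zero_right)
      hence "s * t = 0" using lemL[OF sA tPos] by simp
      hence ft: "f * t = 0" using fann tA by blast
      hence "f * t * f = 0" by simp
      hence "t * f = 0" using sa4 fA tPos by blast
      hence tu: "t = t * u \<and> t = u * t" using ft unfolding u_def by (simp add: algebra_simps)
      show "sa_le Apos t (u * p)" using le_prod[OF uP p pu[symmetric] t] tu tp by blast
    qed
  qed
  show ?thesis unfolding Let_def f_def[symmetric] u_def[symmetric] sa_perp_def[of f]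
    using pu qu m1 m2 m3 by simp
qed

end


theorem corollary4p5:
  fixes A Apos :: "'a::real_algebra_1 set" and p q c s :: 'a
  assumes SA: "synaptic_algebra A Apos"
    and p: "p \<in> sa_P A" and q: "q \<in> sa_P A"
    and c_def: "c = sa_sqrt Apos (p * q * p + sa_perp p * sa_perp q * sa_perp p)"
    and s_def: "s = sa_sqrt Apos (p * sa_perp q * p + sa_perp p * q * sa_perp p)"
  shows
    "(let u = sa_perp (sa_carrier A s) in
        u * p = p * u \<and> p * u = u * q \<and> u * q = q * u \<and> q * u = sa_meet A Apos u p \<and>
        sa_meet A Apos u p = sa_meet A Apos u q \<and> sa_meet A Apos u q = sa_meet A Apos p q)
     \<and>
     (let u = sa_perp (sa_carrier A c) in
        u * p = p * u \<and> p * u = u * sa_perp q \<and> u * sa_perp q = sa_perp q * u \<and>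
        sa_perp q * u = sa_meet A Apos u p \<and>
        sa_meet A Apos u p = sa_meet A Apos u (sa_perp q) \<and>
        sa_meet A Apos u (sa_perp q) = sa_meet A Apos p (sa_perp q))
     \<and>
     (let u = sa_perp (sa_carrier A c) in
        u * sa_perp p = sa_perp p * u \<and> sa_perp p * u = u * q \<and> u * q = q * u \<and>
        q * u = sa_meet A Apos u (sa_perp p) \<and>
        sa_meet A Apos u (sa_perp p) = sa_meet A Apos u q \<and>
        sa_meet A Apos u q = sa_meet A Apos (sa_perp p) q)
     \<and>
     (let u = sa_perp (sa_carrier A s) in
        u * sa_perp p = sa_perp p * u \<and> sa_perp p * u = u * sa_perp q \<and>
        u * sa_perp q = sa_perp q * u \<and> sa_perp q * u = sa_meet A Apos u (sa_perp p) \<and>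
        sa_meet A Apos u (sa_perp p) = sa_meet A Apos u (sa_perp q) \<and>
        sa_meet A Apos u (sa_perp q) = sa_meet A Apos (sa_perp p) (sa_perp q))"
proof -
  have pp: "sa_perp p \<in> sa_P A" using perp_P[OF SA p] .
  have qp: "sa_perp q \<in> sa_P A" using perp_P[OF SA q] .
  have ppp: "sa_perp (sa_perp p) = p" and qpp: "sa_perp (sa_perp q) = q" by (simp_all add: sa_perp_def)
  have c2: "c = sa_sqrt Apos (p * sa_perp (sa_perp q) * p + sa_perp p * sa_perp q * sa_perp p)"
    unfolding ppp qpp using c_def by simp
  have c3: "c = sa_sqrt Apos (sa_perp p * sa_perp q * sa_perp p + sa_perp (sa_perp p) * q * sa_perp (sa_perp p))"
    unfolding ppp qpp using c_def by (simp add: add.commute)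
  have s4: "s = sa_sqrt Apos (sa_perp p * sa_perp (sa_perp q) * sa_perp p + sa_perp (sa_perp p) * sa_perp q * sa_perp (sa_perp p))"
    unfolding ppp qpp using s_def by (simp add: add.commute)
  show ?thesis
    by (rule conjI[OF main[OF SA p q s_def] conjI[OF main[OF SA p qp c2] conjI[OF main[OF SA pp q c3] main[OF SA pp qp s4]]]])
qed

end
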